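(* Let $\mathbb{B}$ be a sized CPO with size ordinal $\zeta_{\mathbb{B}}$ and set of maximal elements $B$, let $S$ be a set, $h:S\times B^m\to B$ and $g_i:S\to S$ ($i=1,\ldots,m$). Suppose that for each $x\in S$, $\eta_h^x:\mathrm{On}(\zeta_{\mathbb{B}})^m\to\mathrm{On}(\zeta_{\mathbb{B}})$ is a production function for $\bar y\mapsto h(x,\bar y)$, and that $\eta_h^x(\alpha_1,\ldots,\alpha_m)>\min_{i=1,\ldots,m}\alpha_i$ for each $x\in S$ and all $\alpha_1,\ldots,\alpha_m\le\zeta_{\mathbb{B}}$ such that $\alpha_k<\zeta_{\mathbb{B}}$ for some $1\le k\le m$. Then there exists a unique function $f:S\to B$ satisfying $f(x)=h(x,f(g_1(x)),\ldots,f(g_m(x)))$ for all $x\in S$.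
   Context: A CPO is a partial order with a least element in which every directed set has a supremum; continuity means preservation of directed suprema; products are ordered componentwise. $\mathrm{On}(\zeta)$ is the set of ordinals $\le\zeta$. A sized CPO is a tuple $\langle\mathbb{B},\zeta,s,\mathtt{cut}\rangle$ where $\mathbb{B}$ is a CPO, $\zeta$ an ordinal, $s:\mathbb{B}\to\mathrm{On}(\zeta)$, $\mathtt{cut}:\mathrm{On}(\zeta)\times\mathbb{B}\to\mathbb{B}$, such that: $s$ is surjective and continuous; $s(x)=\zeta$ iff $x$ is maximal; $\mathtt{cut}$ is monotone in both arguments; $s(\mathtt{cut}(\alpha,x))=\alpha$ if $s(x)>\alpha$; $\mathtt{cut}(\alpha,x)=x$ if $s(x)\le\alpha$. A function between CPOs is regular if it is monotone and maps maximal elements to maximal elements. A production function for a function $f:B^m\to B$ (between sets of maximal elements) is any $\eta:\mathrm{On}(\zeta_{\mathbb{B}})^m\to\mathrm{On}(\zeta_{\mathbb{B}})$ such that there is a regular $f^*:\mathbb{B}^m\to\mathbb{B}$ extending $f$ with $\eta(s(y_1),\ldots,s(y_m))=s(f^*(y_1,\ldots,y_m))$ for all $y_i\in\mathbb{B}$. *)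

theory Defs
  imports "HOL-Library.FuncSet"
begin

text \<open>A CPO is modelled as a type of class order (the carrier is the whole type).
  Ordinals \<le> zeta are modelled as the initial segment {..zeta} of a well-ordered type.\<close>

definition directed :: "'b::order set \<Rightarrow> bool" where
  "directed D \<longleftrightarrow> D \<noteq> {} \<and> (\<forall>x\<in>D. \<forall>y\<in>D. \<exists>z\<in>D. x \<le> z \<and> y \<le> z)"

definition is_lub :: "'b::order set \<Rightarrow> 'b \<Rightarrow> bool" where
  "is_lub D u \<longleftrightarrow> (\<forall>x\<in>D. x \<le> u) \<and> (\<forall>v. (\<forall>x\<in>D. x \<le> v) \<longrightarrow> u \<le> v)"

definition is_cpo :: "'b::order itself \<Rightarrow> bool" where
  "is_cpo _ \<longleftrightarrow> (\<exists>b::'b. \<forall>x. b \<le> x) \<and> (\<forall>D::'b set. directed D \<longrightarrow> (\<exists>u. is_lub D u))"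

definition maximal :: "'b::order \<Rightarrow> bool" where
  "maximal x \<longleftrightarrow> (\<forall>y. x \<le> y \<longrightarrow> y = x)"

text \<open>Sized CPO \<langle>B, zeta, s, ct\<rangle>; On(zeta) = {..zeta}.
  Continuity of s: s maps the supremum of a directed set to the supremum of its image
  (in the ordinals, i.e. the well-order).\<close>

definition sized_cpo :: "'o::wellorder \<Rightarrow> ('b::order \<Rightarrow> 'o) \<Rightarrow> ('o \<Rightarrow> 'b \<Rightarrow> 'b) \<Rightarrow> bool" where
  "sized_cpo zeta s ct \<longleftrightarrow>
     is_cpo TYPE('b) \<and>
     range s = {..zeta} \<and>
     (\<forall>D u. directed D \<longrightarrow> is_lub D u \<longrightarrow> is_lub (s ` D) (s u)) \<and>
     (\<forall>x. s x = zeta \<longleftrightarrow> maximal x) \<and>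
     (\<forall>\<alpha> \<beta> x y. \<alpha> \<le> \<beta> \<longrightarrow> \<beta> \<le> zeta \<longrightarrow> x \<le> y \<longrightarrow> ct \<alpha> x \<le> ct \<beta> y) \<and>
     (\<forall>\<alpha> x. \<alpha> \<le> zeta \<longrightarrow> s x > \<alpha> \<longrightarrow> s (ct \<alpha> x) = \<alpha>) \<and>
     (\<forall>\<alpha> x. \<alpha> \<le> zeta \<longrightarrow> s x \<le> \<alpha> \<longrightarrow> ct \<alpha> x = x)"

definition regular_fun :: "nat \<Rightarrow> ('b::order list \<Rightarrow> 'b) \<Rightarrow> bool" where
  "regular_fun m F \<longleftrightarrow>
     (\<forall>xs ys. length xs = m \<longrightarrow> length ys = m \<longrightarrow> list_all2 (\<le>) xs ys \<longrightarrow> F xs \<le> F ys) \<and>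
     (\<forall>ys. length ys = m \<longrightarrow> list_all maximal ys \<longrightarrow> maximal (F ys))"

definition production_function ::
  "nat \<Rightarrow> ('b::order \<Rightarrow> 'o::wellorder) \<Rightarrow> ('b list \<Rightarrow> 'b) \<Rightarrow> ('o list \<Rightarrow> 'o) \<Rightarrow> bool" where
  "production_function m s f \<eta> \<longleftrightarrow>
     (\<exists>F. regular_fun m F \<and>
          (\<forall>ys. length ys = m \<longrightarrow> list_all maximal ys \<longrightarrow> F ys = f ys) \<and>
          (\<forall>ys. length ys = m \<longrightarrow> \<eta> (map s ys) = s (F ys)))"

end

theory Submission
  imports Defs
begin

lemma fun_ccpo:
  assumes cpo: "is_cpo TYPE('b::order)"
  shows "class.ccpo (\<lambda>A::('s \<Rightarrow> 'b) set. \<lambda>x. SOME u. is_lub ((\<lambda>f. f x) ` A) u) (\<le>) (<)"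
proof -
  have ex: "\<exists>u. is_lub ((\<lambda>f. f x) ` A) u" if "Complete_Partial_Order.chain (\<le>) A" for A :: "('s \<Rightarrow> 'b) set" and x
  proof (cases "A = {}")
    case True
    from cpo obtain b::'b where "\<forall>y. b \<le> y" unfolding is_cpo_def by blast
    then show ?thesis using True unfolding is_lub_def by auto
  next
    case False
    have "directed ((\<lambda>f. f x) ` A)"
      unfolding directed_def using False that
      by (auto simp: Complete_Partial_Order.chain_def le_fun_def)
    then show ?thesis using cpo unfolding is_cpo_def by blast
  qed
  show ?thesis
  proof (unfold_locales)
    fix A :: "('s \<Rightarrow> 'b) set" and f assume c: "Complete_Partial_Order.chain (\<le>) A" and "f \<in> A"
    show "f \<le> (\<lambda>x. SOME u. is_lub ((\<lambda>f. f x) ` A) u)"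
    proof (rule le_funI)
      fix x
      have "is_lub ((\<lambda>f. f x) ` A) (SOME u. is_lub ((\<lambda>f. f x) ` A) u)" by (rule someI_ex[OF ex[OF c]])
      then show "f x \<le> (SOME u. is_lub ((\<lambda>f. f x) ` A) u)" using \<open>f \<in> A\<close> unfolding is_lub_def by auto
    qed
  next
    fix A :: "('s \<Rightarrow> 'b) set" and z assume c: "Complete_Partial_Order.chain (\<le>) A" and "\<And>f. f \<in> A \<Longrightarrow> f \<le> z"
    show "(\<lambda>x. SOME u. is_lub ((\<lambda>f. f x) ` A) u) \<le> z"
    proof (rule le_funI)
      fix x
      have "is_lub ((\<lambda>f. f x) ` A) (SOME u. is_lub ((\<lambda>f. f x) ` A) u)" by (rule someI_ex[OF ex[OF c]])
      then show "(SOME u. is_lub ((\<lambda>f. f x) ` A) u) \<le> z x" using \<open>\<And>f. f \<in> A \<Longrightarrow> f \<le> z\<close> unfolding is_lub_def le_fun_def by auto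
    qed
  qed
qed


theorem corollary4p8:
  fixes zeta :: "'o::wellorder"
    and s :: "'b::order \<Rightarrow> 'o"
    and ct :: "'o \<Rightarrow> 'b \<Rightarrow> 'b"
    and m :: nat
    and S :: "'s set"
    and h :: "'s \<Rightarrow> 'b list \<Rightarrow> 'b"
    and g :: "nat \<Rightarrow> 's \<Rightarrow> 's"
    and \<eta> :: "'s \<Rightarrow> 'o list \<Rightarrow> 'o"
  assumes sized: "sized_cpo zeta s ct"
    and g_maps: "\<forall>i<m. \<forall>x\<in>S. g i x \<in> S"
    and h_maps: "\<forall>x\<in>S. \<forall>ys. length ys = m \<longrightarrow> list_all maximal ys \<longrightarrow> maximal (h x ys)"
    and prod: "\<forall>x\<in>S. production_function m s (h x) (\<eta> x)"
    and grow: "\<forall>x\<in>S. \<forall>\<alpha>s. length \<alpha>s = m \<longrightarrow> list_all (\<lambda>\<alpha>. \<alpha> \<le> zeta) \<alpha>s \<longrightarrow>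
                  (\<exists>k<m. \<alpha>s ! k < zeta) \<longrightarrow> \<eta> x \<alpha>s > Min (set \<alpha>s)"
  shows "\<exists>!f. f \<in> S \<rightarrow>\<^sub>E {b. maximal b} \<and>
              (\<forall>x\<in>S. f x = h x (map (\<lambda>i. f (g i x)) [0..<m]))"
proof -
  from sized have cpo: "is_cpo TYPE('b)" and rng: "range s = {..zeta}"
    and smax: "\<And>x. s x = zeta \<longleftrightarrow> maximal x" unfolding sized_cpo_def by auto
  from cpo obtain b0 :: 'b where b0: "\<And>y. b0 \<le> y" unfolding is_cpo_def by blast
  define L where "L = (\<lambda>A::('s \<Rightarrow> 'b) set. \<lambda>x. SOME u. is_lub ((\<lambda>f. f x) ` A) u)"
  have cc: "class.ccpo L (\<le>) (<)" unfolding L_def by (rule fun_ccpo[OF cpo])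
  define Pr where "Pr = (\<lambda>x F. regular_fun m F \<and>
          (\<forall>ys. length ys = m \<longrightarrow> list_all maximal ys \<longrightarrow> F ys = h x ys) \<and>
          (\<forall>ys. length ys = m \<longrightarrow> \<eta> x (map s ys) = s (F ys)))"
  define F where "F = (\<lambda>x. SOME G. Pr x G)"
  have Fp: "regular_fun m (F x) \<and>
          (\<forall>ys. length ys = m \<longrightarrow> list_all maximal ys \<longrightarrow> F x ys = h x ys) \<and>
          (\<forall>ys. length ys = m \<longrightarrow> \<eta> x (map s ys) = s (F x ys))" if "x \<in> S" for x
  proof -
    from prod that obtain G where "regular_fun m G \<and>
          (\<forall>ys. length ys = m \<longrightarrow> list_all maximal ys \<longrightarrow> G ys = h x ys) \<and>
          (\<forall>ys. length ys = m \<longrightarrow> \<eta> x (map s ys) = s (G ys))"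
      unfolding production_function_def by blast
    then have "Pr x G" unfolding Pr_def by simp
    then have "Pr x (F x)" unfolding F_def by (rule someI[of "Pr x"])
    then show ?thesis unfolding Pr_def by simp
  qed
  define Phi where "Phi = (\<lambda>f::'s \<Rightarrow> 'b. \<lambda>x. if x \<in> S then F x (map (\<lambda>i. f (g i x)) [0..<m]) else b0)"
  have mono: "monotone (\<le>) (\<le>) Phi"
  proof (rule monotoneI)
    fix f f' :: "'s \<Rightarrow> 'b" assume le: "f \<le> f'"
    show "Phi f \<le> Phi f'" unfolding le_fun_def Phi_def
    proof
      fix x show "(if x \<in> S then F x (map (\<lambda>i. f (g i x)) [0..<m]) else b0)
          \<le> (if x \<in> S then F x (map (\<lambda>i. f' (g i x)) [0..<m]) else b0)"
      proof (cases "x \<in> S")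
        case True
        have "list_all2 (\<le>) (map (\<lambda>i. f (g i x)) [0..<m]) (map (\<lambda>i. f' (g i x)) [0..<m])"
          using le by (auto simp: list_all2_conv_all_nth le_fun_def)
        then show ?thesis using Fp[OF True] True unfolding regular_fun_def by auto
      qed simp
    qed
  qed
  define f0 where "f0 = ccpo.fixp L (\<le>) Phi"
  have fix0: "f0 = Phi f0" unfolding f0_def by (rule ccpo.fixp_unfold[OF cc mono])
  have low: "f0 \<le> z" if "Phi z \<le> z" for z
    using that unfolding f0_def by (rule ccpo.fixp_lowerbound[OF cc mono])
  have eq0: "f0 x = F x (map (\<lambda>i. f0 (g i x)) [0..<m])" if "x \<in> S" for x
    using fun_cong[OF fix0, of x] that unfolding Phi_def by simp
  have srng: "s y \<le> zeta" for y using rng by auto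
  have tot: "maximal (f0 x)" if "x \<in> S" for x
  proof (rule ccontr)
    assume nm: "\<not> maximal (f0 x)"
    define \<alpha> where "\<alpha> = (LEAST a. a \<in> s ` f0 ` S)"
    have "\<alpha> \<in> s ` f0 ` S" unfolding \<alpha>_def using that by (intro LeastI) blast
    then obtain y where y: "y \<in> S" "s (f0 y) = \<alpha>" by auto
    have amin: "\<alpha> \<le> s (f0 z)" if "z \<in> S" for z unfolding \<alpha>_def using that by (intro Least_le) blast
    have "\<alpha> < zeta" using amin[OF that] smax[of "f0 x"] nm srng[of "f0 x"] by auto
    define ys where "ys = map (\<lambda>i. f0 (g i y)) [0..<m]"
    have ly: "length ys = m" unfolding ys_def by simp
    have e1: "s (f0 y) = \<eta> y (map s ys)" using eq0[OF y(1)] Fp[OF y(1)] ly ys_def by metis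
    show False
    proof (cases "list_all maximal ys")
      case True
      then have "maximal (f0 y)" using eq0[OF y(1)] Fp[OF y(1)] h_maps y(1) ly unfolding ys_def by metis
      then show False using smax y \<open>\<alpha> < zeta\<close> by (metis order.irrefl)
    next
      case False
      then obtain k where k: "k < m" "\<not> maximal (ys ! k)" using ly by (auto simp: list_all_length)
      have "s (ys ! k) < zeta" using k smax srng[of "ys!k"] by (metis order_le_less)
      then have "map s ys ! k < zeta" using k ly by simp
      then have gt: "\<eta> y (map s ys) > Min (set (map s ys))"
      proof -
        have "list_all (\<lambda>\<alpha>. \<alpha> \<le> zeta) (map s ys)" using srng by (simp add: list_all_iff)
        moreover have "\<exists>k<m. map s ys ! k < zeta" using k \<open>map s ys ! k < zeta\<close> by blast
        ultimately show ?thesis using grow y(1) ly by (metis length_map)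
      qed
      have "Min (set (map s ys)) \<in> set (map s ys)" using k ly by (intro Min_in) auto
      then obtain j where j: "j < m" "Min (set (map s ys)) = s (f0 (g j y))" unfolding ys_def by auto
      have "g j y \<in> S" using g_maps j y by auto
      then have "\<alpha> \<le> Min (set (map s ys))" using amin j by auto
      then show False using gt e1 y by auto
    qed
  qed
  define f where "f = restrict f0 S"
  have eqh: "f0 x = h x (map (\<lambda>i. f0 (g i x)) [0..<m])" if "x \<in> S" for x
  proof -
    have "list_all maximal (map (\<lambda>i. f0 (g i x)) [0..<m])"
      using tot g_maps that by (auto simp: list_all_iff)
    then show ?thesis using eq0[OF that] Fp[OF that] by auto
  qed
  show ?thesis
  proof (rule ex1I[of _ f])
    show "f \<in> S \<rightarrow>\<^sub>E {b. maximal b} \<and> (\<forall>x\<in>S. f x = h x (map (\<lambda>i. f (g i x)) [0..<m]))"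
    proof (intro conjI ballI)
      show "f \<in> S \<rightarrow>\<^sub>E {b. maximal b}" unfolding f_def using tot by auto
      fix x assume x: "x \<in> S"
      have meq: "map (\<lambda>i. f (g i x)) [0..<m] = map (\<lambda>i. f0 (g i x)) [0..<m]"
        unfolding f_def using g_maps x by auto
      then show "f x = h x (map (\<lambda>i. f (g i x)) [0..<m])" unfolding meq using eqh[OF x] x by (simp add: f_def)
    qed
  next
    fix f' assume a: "f' \<in> S \<rightarrow>\<^sub>E {b. maximal b} \<and> (\<forall>x\<in>S. f' x = h x (map (\<lambda>i. f' (g i x)) [0..<m]))"
    define f'' where "f'' = (\<lambda>x. if x \<in> S then f' x else b0)"
    have "Phi f'' \<le> f''" unfolding le_fun_def
    proof
      fix x show "Phi f'' x \<le> f'' x"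
      proof (cases "x \<in> S")
        case True
        have m1: "map (\<lambda>i. f'' (g i x)) [0..<m] = map (\<lambda>i. f' (g i x)) [0..<m]"
          unfolding f''_def using g_maps True by auto
        have "list_all maximal (map (\<lambda>i. f' (g i x)) [0..<m])"
          using a g_maps True by (auto simp: list_all_iff PiE_iff)
        note ml = this
        have "Phi f'' x = F x (map (\<lambda>i. f'' (g i x)) [0..<m])" using True by (simp add: Phi_def)
        also have "\<dots> = F x (map (\<lambda>i. f' (g i x)) [0..<m])" unfolding m1 ..
        also have "\<dots> = h x (map (\<lambda>i. f' (g i x)) [0..<m])" using Fp[OF True] ml by simp
        also have "\<dots> = f' x" using a True by simp
        finally have "Phi f'' x = f' x" .
        then show ?thesis using True f''_def by simp
      qed (simp add: Phi_def f''_def)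
    qed
    then have le: "f0 \<le> f''" by (rule low)
    show "f' = f"
    proof
      fix x show "f' x = f x"
      proof (cases "x \<in> S")
        case True
        have "f0 x \<le> f' x" using le True unfolding le_fun_def f''_def by (metis)
        then show ?thesis using tot[OF True] True f_def unfolding maximal_def by auto
      next
        case False then show ?thesis using a f_def by (auto simp: PiE_iff extensional_def)
      qed
    qed
  qed
qed

end
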